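(* Let $\mathcal{X}=\mathcal{UD}(\chi,T',\theta)$ be the crystal on $\mathbb{Z}^6$ obtained by ultra-discretizing the positive geometric crystal $\chi$ of type $G_2^{(1)}$ described in the context, and let $B_\infty$ be the $D_4^{(3)}$-crystal described in the context. Then $\mathcal{X}$ is isomorphic to $B_\infty$ as a crystal, i.e. there is a bijection $\Omega:\mathcal{X}\to B_\infty$ such that $\Omega\circ\tilde e_i=\tilde e_i\circ\Omega$, $\Omega\circ\tilde f_i=\tilde f_i\circ\Omega$, $\varepsilon_i\circ\Omega=\varepsilon_i$ and $\varphi_i\circ\Omega=\varphi_i$ (hence also $\mathrm{wt}_i\circ\Omega=\mathrm{wt}_i$) for all $i\in\{0,1,2\}$.
   Context: Index set $I=\{0,1,2\}$. The affine Lie algebra $\mathfrak g$ of type $G_2^{(1)}$ has Cartan matrix $(a_{ij})_{i,j=0,1,2}$ with rows $(2,-1,0),(-1,2,-1),(0,-3,2)$; its Langlands dual is of type $D_4^{(3)}$, whose Cartan matrix has rows $(2,-1,0),(-1,2,-3),(0,-1,2)$. The geometric crystal $\chi$. Its underlying variety is the algebraic torus $T'=(\mathbb C^\times)^6$ with coordinates $x=(x_0,\dots,x_5)$ (realized in the paper, via the positive structure $\theta$, as $\{Y_0(x_0)Y_1(x_1)Y_2(x_2)Y_1(x_3)Y_2(x_4)Y_1(x_5)v\}$ inside the 15-dimensional fundamental representation $W(\varpi_1)$ of $G_2^{(1)}$, $v$ a highest vector; in the coordinates $x$ the structure is as follows). For $c\in\mathbb C^\times$: $i=1$: put $a=\frac{x_0}{x_1}$,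 $b=\frac{x_0x_2^3}{x_1^2x_3}$, $d=\frac{x_0x_2^3x_4^3}{x_1^2x_3^2x_5}$. Then $e_1^c(x)=(x_0,\mathcal C_1x_1,x_2,\mathcal C_3x_3,x_4,\mathcal C_5x_5)$ with $\mathcal C_1=\frac{ca+b+d}{a+b+d}$, $\mathcal C_3=\frac{ca+cb+d}{ca+b+d}$, $\mathcal C_5=\frac{c(a+b+d)}{ca+cb+d}$; $\varepsilon_1(x)=a+b+d$; $\gamma_1(x)=\frac{x_1^2x_3^2x_5^2}{x_0x_2^3x_4^3}$. $i=2$: put $p=\frac{x_1}{x_2}$, $q=\frac{x_1x_3}{x_2^2x_4}$. Then $e_2^c(x)=(x_0,x_1,\mathcal C_2x_2,x_3,\mathcal C_4x_4,x_5)$ with $\mathcal C_2=\frac{cp+q}{p+q}$, $\mathcal C_4=\frac{c(p+q)}{cp+q}$; $\varepsilon_2(x)=p+q$; $\gamma_2(x)=\frac{x_2^2x_4^2}{x_1x_3x_5}$. $i=0$: put $D=c^2x_0^2x_2^3x_3+x_1x_2^3x_3^2x_5+cx_0\big(x_1x_3^3+3x_1x_2x_3^2x_4+3x_1x_2^2x_3x_4^2+x_2^3(x_3^2+x_1x_4^3+x_1x_3x_5)\big)$, $E=x_0^2x_2^3x_3+x_1x_2^3x_3^2x_5+x_0\big(x_1x_3^3+3x_1x_2x_3^2x_4+3x_1x_2^2x_3x_4^2+x_2^3(x_3^2+x_1x_4^3+x_1x_3x_5)\big)$, $F=cx_0^2x_2^3x_3+x_1x_2^3x_3^2x_5+x_0\big(cx_1x_3^3+3cx_1x_2x_3^2x_4+3cx_1x_2^2x_3x_4^2+x_2^3(x_3^2+cx_1x_4^3+cx_1x_3x_5)\big)$,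 $G=cx_0^2x_2^3x_3+x_1x_2^3x_3^2x_5+x_0\big(x_1x_3^3+(2+c)x_1x_2x_3^2x_4+(1+2c)x_1x_2^2x_3x_4^2+x_2^3(x_3^2+cx_1x_4^3+cx_1x_3x_5)\big)$, $H=cx_0^2x_2^3x_3+x_1x_2^3x_3^2x_5+x_0\big(x_1x_3^3+3x_1x_2x_3^2x_4+3x_1x_2^2x_3x_4^2+x_2^3(x_3^2+x_1x_4^3+cx_1x_3x_5)\big)$. Then $e_0^c(x)=\big(\frac{D}{cE}x_0,\frac{F}{cE}x_1,\frac{G}{cE}x_2,\frac{DH}{c^2EF}x_3,\frac{D}{cG}x_4,\frac{D}{cH}x_5\big)$, $\varepsilon_0(x)=\frac{E}{x_0^3x_2^3x_3}$, $\gamma_0(x)=\frac{x_0^2}{x_1x_3x_5}$. All these are ratios of polynomials with positive coefficients (positive structure). Ultra-discretization. For a rational function $f(c,x)=g/h$ with $g,h$ polynomials in $c,x_0,\dots,x_5$ with positive coefficients, and $(k,n)\in\mathbb Z\times\mathbb Z^6$, set $\mathcal{UD}(f)(k,n)=\deg_t f(t^k,t^{n_0},\dots,t^{n_5})$, the degree (order of pole at $t=\infty$) in the variable $t$; equivalently $\max$ over monomials of $g$ of the linear form given by the exponents, minus the same for $h$. The crystal $\mathcal X=\mathcal{UD}(\chi,T',\theta)$ has underlying set $\mathbb Z^6\ni n=(n_0,\dots,n_5)$ and: if $e_i^c(x)=(x_0R_0(c,x),\dots,x_5R_5(c,x))$, then $\tilde e_i(n)=(n_j+\mathcal{UD}(R_j)(1,n))_{j=0}^5$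 and $\tilde f_i(n)=(n_j+\mathcal{UD}(R_j)(-1,n))_{j=0}^5$; $\mathrm{wt}_i(n)=\mathcal{UD}(\gamma_i)(n)$, $\varepsilon_i(n)=\mathcal{UD}(\varepsilon_i)(n)$, $\varphi_i(n)=\varepsilon_i(n)+\mathrm{wt}_i(n)$. The crystal $B_\infty$ of type $D_4^{(3)}$. Its underlying set is $\{b=(b_1,b_2,b_3,\bar b_3,\bar b_2,\bar b_1)\in\mathbb Z^6: b_3\equiv\bar b_3 \pmod 2\}$. Write $(y)_+=\max(y,0)$. Set $s(b)=b_1+b_2+\frac{b_3+\bar b_3}{2}+\bar b_2+\bar b_1$, $z_1=\bar b_1-b_1$, $z_2=\bar b_2-\bar b_3$, $z_3=b_3-b_2$, $z_4=(\bar b_3-b_3)/2$, and $\max A=\max(0,z_1,z_1+z_2,z_1+z_2+3z_4,z_1+z_2+z_3+3z_4,2z_1+z_2+z_3+3z_4)$. Then $\varepsilon_1(b)=\bar b_1+(\bar b_3-\bar b_2+(b_2-b_3)_+)_+$, $\varphi_1(b)=b_1+(b_3-b_2+(\bar b_2-\bar b_3)_+)_+$; $\varepsilon_2(b)=\bar b_2+\frac12(b_3-\bar b_3)_+$, $\varphi_2(b)=b_2+\frac12(\bar b_3-b_3)_+$; $\varepsilon_0(b)=-s(b)+\max A-(2z_1+z_2+z_3+3z_4)$, $\varphi_0(b)=-s(b)+\max A$; $\mathrm{wt}_i=\varphi_i-\varepsilon_i$. $\tilde e_1b$ equals: $(\dots,\bar b_2+1,\bar b_1-1)$ if $\bar b_2-\bar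 b_3\ge(b_2-b_3)_+$; $(\dots,b_3+1,\bar b_3-1,\dots)$ if $\bar b_2-\bar b_3<0\le b_3-b_2$; $(b_1+1,b_2-1,\dots)$ if $(\bar b_2-\bar b_3)_+<b_2-b_3$. $\tilde f_1b$ equals: $(b_1-1,b_2+1,\dots)$ if $(\bar b_2-\bar b_3)_+\le b_2-b_3$; $(\dots,b_3-1,\bar b_3+1,\dots)$ if $\bar b_2-\bar b_3\le0<b_3-b_2$; $(\dots,\bar b_2-1,\bar b_1+1)$ if $\bar b_2-\bar b_3>(b_2-b_3)_+$. $\tilde e_2b$ equals $(\dots,\bar b_3+2,\bar b_2-1,\dots)$ if $\bar b_3\ge b_3$, and $(\dots,b_2+1,b_3-2,\dots)$ if $\bar b_3<b_3$. $\tilde f_2b$ equals $(\dots,b_2-1,b_3+2,\dots)$ if $\bar b_3\le b_3$, and $(\dots,\bar b_3-2,\bar b_2+1,\dots)$ if $\bar b_3>b_3$. (Here "$\dots$" means the unlisted coordinates are unchanged.) For $\tilde e_0$ consider the conditions $(E_1)$: $z_1+z_2+z_3+3z_4<0$, $z_1+z_2+3z_4<0$, $z_1+z_2<0$, $z_1<0$; $(E_2)$: $z_1+z_2+z_3+3z_4<0$, $z_2+3z_4<0$, $z_2<0$, $z_1\ge0$; $(E_3)$: $z_1+z_3+3z_4<0$, $z_3+3z_4<0$, $z_4<0$, $z_2\ge0$, $z_1+z_2\ge0$; $(E_4)$: $z_1+z_2+3z_4\ge0$, $z_2+3z_4\ge0$, $z_4\ge0$, $z_3<0$, $z_1+z_3<0$;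 $(E_5)$: $z_1+z_2+z_3+3z_4\ge0$, $z_3+3z_4\ge0$, $z_3\ge0$, $z_1<0$; $(E_6)$: $z_1+z_2+z_3+3z_4\ge0$, $z_1+z_3+3z_4\ge0$, $z_1+z_3\ge0$, $z_1\ge0$; and let $(F_j)$ be $(E_j)$ with $\ge$ replaced by $>$ and $<$ replaced by $\le$. Then $\tilde e_0b$ equals, under $(E_1)$ through $(E_6)$ respectively: $(b_1-1,\dots)$; $(\dots,b_3-1,\bar b_3-1,\dots,\bar b_1+1)$; $(\dots,b_3-2,\dots,\bar b_2+1,\dots)$; $(\dots,b_2-1,\dots,\bar b_3+2,\dots)$; $(b_1-1,\dots,b_3+1,\bar b_3+1,\dots)$; $(\dots,\bar b_1+1)$. And $\tilde f_0b$ equals, under $(F_1)$ through $(F_6)$ respectively: $(b_1+1,\dots)$; $(\dots,b_3+1,\bar b_3+1,\dots,\bar b_1-1)$; $(\dots,b_3+2,\dots,\bar b_2-1,\dots)$; $(\dots,b_2+1,\dots,\bar b_3-2,\dots)$; $(b_1+1,\dots,b_3-1,\bar b_3-1,\dots)$; $(\dots,\bar b_1-1)$. $B_\infty$ is the limit of the coherent family of perfect crystals of type $D_4^{(3)}$. *)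

theory Defs
  imports Complex_Main
begin

text \<open>A positive rational function f(c,x) is given as a real function of c and
x = (x 0, ..., x 5).\<close>

definition UD :: "(real \<Rightarrow> (nat \<Rightarrow> real) \<Rightarrow> real) \<Rightarrow> int \<Rightarrow> int list \<Rightarrow> int" where
  "UD f k n = (THE d::int. \<exists>L::real. L \<noteq> 0 \<and>
      ((\<lambda>t::real. f (t powi k) (\<lambda>j. t powi (n ! j)) / t powi d) \<longlongrightarrow> L) at_top)"

definition polyD :: "real \<Rightarrow> (nat \<Rightarrow> real) \<Rightarrow> real" where
  "polyD c x = c^2 * x 0^2 * x 2^3 * x 3 + x 1 * x 2^3 * x 3^2 * x 5
     + c * x 0 * (x 1 * x 3^3 + 3 * x 1 * x 2 * x 3^2 * x 4 + 3 * x 1 * x 2^2 * x 3 * x 4^2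
        + x 2^3 * (x 3^2 + x 1 * x 4^3 + x 1 * x 3 * x 5))"

definition polyE :: "real \<Rightarrow> (nat \<Rightarrow> real) \<Rightarrow> real" where
  "polyE c x = x 0^2 * x 2^3 * x 3 + x 1 * x 2^3 * x 3^2 * x 5
     + x 0 * (x 1 * x 3^3 + 3 * x 1 * x 2 * x 3^2 * x 4 + 3 * x 1 * x 2^2 * x 3 * x 4^2
        + x 2^3 * (x 3^2 + x 1 * x 4^3 + x 1 * x 3 * x 5))"

definition polyF :: "real \<Rightarrow> (nat \<Rightarrow> real) \<Rightarrow> real" where
  "polyF c x = c * x 0^2 * x 2^3 * x 3 + x 1 * x 2^3 * x 3^2 * x 5
     + x 0 * (c * x 1 * x 3^3 + 3 * c * x 1 * x 2 * x 3^2 * x 4 + 3 * c * x 1 * x 2^2 * x 3 * x 4^2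
        + x 2^3 * (x 3^2 + c * x 1 * x 4^3 + c * x 1 * x 3 * x 5))"

definition polyG :: "real \<Rightarrow> (nat \<Rightarrow> real) \<Rightarrow> real" where
  "polyG c x = c * x 0^2 * x 2^3 * x 3 + x 1 * x 2^3 * x 3^2 * x 5
     + x 0 * (x 1 * x 3^3 + (2 + c) * x 1 * x 2 * x 3^2 * x 4 + (1 + 2 * c) * x 1 * x 2^2 * x 3 * x 4^2
        + x 2^3 * (x 3^2 + c * x 1 * x 4^3 + c * x 1 * x 3 * x 5))"

definition polyH :: "real \<Rightarrow> (nat \<Rightarrow> real) \<Rightarrow> real" where
  "polyH c x = c * x 0^2 * x 2^3 * x 3 + x 1 * x 2^3 * x 3^2 * x 5
     + x 0 * (x 1 * x 3^3 + 3 * x 1 * x 2 * x 3^2 * x 4 + 3 * x 1 * x 2^2 * x 3 * x 4^2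
        + x 2^3 * (x 3^2 + x 1 * x 4^3 + c * x 1 * x 3 * x 5))"

text \<open>The factors R_j with e_i^c(x) = (x_0 R_0(c,x), ..., x_5 R_5(c,x)).\<close>

definition geoR :: "nat \<Rightarrow> nat \<Rightarrow> real \<Rightarrow> (nat \<Rightarrow> real) \<Rightarrow> real" where
  "geoR i j c x =
    (if i = 1 then
       (let a = x 0 / x 1;
            b = x 0 * x 2^3 / (x 1^2 * x 3);
            d = x 0 * x 2^3 * x 4^3 / (x 1^2 * x 3^2 * x 5)
        in if j = 1 then (c*a + b + d) / (a + b + d)
           else if j = 3 then (c*a + c*b + d) / (c*a + b + d)
           else if j = 5 then c * (a + b + d) / (c*a + c*b + d)
           else 1)
     else if i = 2 then
       (let p = x 1 / x 2;
            q = x 1 * x 3 / (x 2^2 * x 4)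
        in if j = 2 then (c*p + q) / (p + q)
           else if j = 4 then c * (p + q) / (c*p + q)
           else 1)
     else if i = 0 then
       (if j = 0 then polyD c x / (c * polyE c x)
        else if j = 1 then polyF c x / (c * polyE c x)
        else if j = 2 then polyG c x / (c * polyE c x)
        else if j = 3 then polyD c x * polyH c x / (c^2 * polyE c x * polyF c x)
        else if j = 4 then polyD c x / (c * polyG c x)
        else if j = 5 then polyD c x / (c * polyH c x)
        else 1)
     else 1)"

definition geoEps :: "nat \<Rightarrow> (nat \<Rightarrow> real) \<Rightarrow> real" where
  "geoEps i x =
    (if i = 1 then x 0 / x 1 + x 0 * x 2^3 / (x 1^2 * x 3) + x 0 * x 2^3 * x 4^3 / (x 1^2 * x 3^2 * x 5)
     else if i = 2 then x 1 / x 2 + x 1 * x 3 / (x 2^2 * x 4)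
     else polyE 1 x / (x 0^3 * x 2^3 * x 3))"

definition geoGamma :: "nat \<Rightarrow> (nat \<Rightarrow> real) \<Rightarrow> real" where
  "geoGamma i x =
    (if i = 1 then x 1^2 * x 3^2 * x 5^2 / (x 0 * x 2^3 * x 4^3)
     else if i = 2 then x 2^2 * x 4^2 / (x 1 * x 3 * x 5)
     else x 0^2 / (x 1 * x 3 * x 5))"

definition Xset :: "int list set" where
  "Xset = {n. length n = 6}"

definition eX :: "nat \<Rightarrow> int list \<Rightarrow> int list" where
  "eX i n = map (\<lambda>j. n ! j + UD (geoR i j) 1 n) [0..<6]"

definition fX :: "nat \<Rightarrow> int list \<Rightarrow> int list" where
  "fX i n = map (\<lambda>j. n ! j + UD (geoR i j) (-1) n) [0..<6]"

definition wtX :: "nat \<Rightarrow> int list \<Rightarrow> int" where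
  "wtX i n = UD (\<lambda>c x. geoGamma i x) 0 n"

definition epsX :: "nat \<Rightarrow> int list \<Rightarrow> int" where
  "epsX i n = UD (\<lambda>c x. geoEps i x) 0 n"

definition phiX :: "nat \<Rightarrow> int list \<Rightarrow> int" where
  "phiX i n = epsX i n + wtX i n"

text \<open>b = [b1, b2, b3, bb3, bb2, bb1] (bbk stands for \bar b_k).\<close>

definition Binf :: "int list set" where
  "Binf = {b. length b = 6 \<and> even (b ! 2 - b ! 3)}"

definition pos :: "int \<Rightarrow> int" where "pos y = max y 0"

definition zB1 :: "int list \<Rightarrow> int" where "zB1 b = b!5 - b!0"
definition zB2 :: "int list \<Rightarrow> int" where "zB2 b = b!4 - b!3"
definition zB3 :: "int list \<Rightarrow> int" where "zB3 b = b!2 - b!1"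
definition zB4 :: "int list \<Rightarrow> int" where "zB4 b = (b!3 - b!2) div 2"
definition sB :: "int list \<Rightarrow> int" where
  "sB b = b!0 + b!1 + (b!2 + b!3) div 2 + b!4 + b!5"

definition maxA :: "int list \<Rightarrow> int" where
  "maxA b = (let z1 = zB1 b; z2 = zB2 b; z3 = zB3 b; z4 = zB4 b in
     Max {0, z1, z1 + z2, z1 + z2 + 3*z4, z1 + z2 + z3 + 3*z4, 2*z1 + z2 + z3 + 3*z4})"

definition epsB :: "nat \<Rightarrow> int list \<Rightarrow> int" where
  "epsB i b =
    (if i = 1 then b!5 + pos (b!3 - b!4 + pos (b!1 - b!2))
     else if i = 2 then b!4 + pos (b!2 - b!3) div 2
     else - sB b + maxA b - (2 * zB1 b + zB2 b + zB3 b + 3 * zB4 b))"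

definition phiB :: "nat \<Rightarrow> int list \<Rightarrow> int" where
  "phiB i b =
    (if i = 1 then b!0 + pos (b!2 - b!1 + pos (b!4 - b!3))
     else if i = 2 then b!1 + pos (b!3 - b!2) div 2
     else - sB b + maxA b)"

definition wtB :: "nat \<Rightarrow> int list \<Rightarrow> int" where
  "wtB i b = phiB i b - epsB i b"

definition addv :: "int list \<Rightarrow> int list \<Rightarrow> int list" where
  "addv b d = map2 (+) b d"

definition eB :: "nat \<Rightarrow> int list \<Rightarrow> int list" where
  "eB i b =
    (if i = 1 then
       (if b!4 - b!3 \<ge> pos (b!1 - b!2) then addv b [0,0,0,0,1,-1]
        else if b!4 - b!3 < 0 \<and> 0 \<le> b!2 - b!1 then addv b [0,0,1,-1,0,0]
        else addv b [1,-1,0,0,0,0])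
     else if i = 2 then
       (if b!3 \<ge> b!2 then addv b [0,0,0,2,-1,0] else addv b [0,1,-2,0,0,0])
     else
       (let z1 = zB1 b; z2 = zB2 b; z3 = zB3 b; z4 = zB4 b in
        if z1+z2+z3+3*z4 < 0 \<and> z1+z2+3*z4 < 0 \<and> z1+z2 < 0 \<and> z1 < 0
          then addv b [-1,0,0,0,0,0]
        else if z1+z2+z3+3*z4 < 0 \<and> z2+3*z4 < 0 \<and> z2 < 0 \<and> z1 \<ge> 0
          then addv b [0,0,-1,-1,0,1]
        else if z1+z3+3*z4 < 0 \<and> z3+3*z4 < 0 \<and> z4 < 0 \<and> z2 \<ge> 0 \<and> z1+z2 \<ge> 0
          then addv b [0,0,-2,0,1,0]
        else if z1+z2+3*z4 \<ge> 0 \<and> z2+3*z4 \<ge> 0 \<and> z4 \<ge> 0 \<and> z3 < 0 \<and> z1+z3 < 0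
          then addv b [0,-1,0,2,0,0]
        else if z1+z2+z3+3*z4 \<ge> 0 \<and> z3+3*z4 \<ge> 0 \<and> z3 \<ge> 0 \<and> z1 < 0
          then addv b [-1,0,1,1,0,0]
        else addv b [0,0,0,0,0,1]))"

definition fB :: "nat \<Rightarrow> int list \<Rightarrow> int list" where
  "fB i b =
    (if i = 1 then
       (if pos (b!4 - b!3) \<le> b!1 - b!2 then addv b [-1,1,0,0,0,0]
        else if b!4 - b!3 \<le> 0 \<and> 0 < b!2 - b!1 then addv b [0,0,-1,1,0,0]
        else addv b [0,0,0,0,-1,1])
     else if i = 2 then
       (if b!3 \<le> b!2 then addv b [0,-1,2,0,0,0] else addv b [0,0,0,-2,1,0])
     else
       (let z1 = zB1 b; z2 = zB2 b; z3 = zB3 b; z4 = zB4 b in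
        if z1+z2+z3+3*z4 \<le> 0 \<and> z1+z2+3*z4 \<le> 0 \<and> z1+z2 \<le> 0 \<and> z1 \<le> 0
          then addv b [1,0,0,0,0,0]
        else if z1+z2+z3+3*z4 \<le> 0 \<and> z2+3*z4 \<le> 0 \<and> z2 \<le> 0 \<and> z1 > 0
          then addv b [0,0,1,1,0,-1]
        else if z1+z3+3*z4 \<le> 0 \<and> z3+3*z4 \<le> 0 \<and> z4 \<le> 0 \<and> z2 > 0 \<and> z1+z2 > 0
          then addv b [0,0,2,0,-1,0]
        else if z1+z2+3*z4 > 0 \<and> z2+3*z4 > 0 \<and> z4 > 0 \<and> z3 \<le> 0 \<and> z1+z3 \<le> 0
          then addv b [0,1,0,-2,0,0]
        else if z1+z2+z3+3*z4 > 0 \<and> z3+3*z4 > 0 \<and> z3 > 0 \<and> z1 \<le> 0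
          then addv b [1,0,-1,-1,0,0]
        else addv b [0,0,0,0,0,-1]))"

end

theory Submission
  imports Defs
begin

definition ud :: "(real \<Rightarrow> real) \<Rightarrow> int \<Rightarrow> bool" where
  "ud F d \<longleftrightarrow> (\<exists>L>0. ((\<lambda>t. F t / t powi d) \<longlongrightarrow> L) at_top)"

lemma ev_pos: "eventually (\<lambda>t::real. t > 0) at_top"
  by (rule eventually_gt_at_top)

lemma powi_neg_tendsto:
  assumes "m < 0" shows "((\<lambda>t::real. t powi m) \<longlongrightarrow> 0) at_top"
proof -
  have e: "\<And>t::real. t powi m = inverse (t ^ nat (-m))"
  proof -
    fix t :: real
    have "t powi m = t powi (- int (nat (-m)))" using assms by simp
    also have "\<dots> = inverse (t ^ nat (-m))" by (simp only: power_int_minus power_int_of_nat)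
    finally show "t powi m = inverse (t ^ nat (-m))" .
  qed
  have "filterlim (\<lambda>t::real. t ^ nat (-m)) at_top at_top"
    using assms by (intro filterlim_pow_at_top filterlim_ident) auto
  hence "((\<lambda>t::real. inverse (t ^ nat (-m))) \<longlongrightarrow> 0) at_top"
    by (rule tendsto_inverse_0_at_top)
  thus ?thesis by (simp only: e)
qed

lemma lim_uniq: "((f::real\<Rightarrow>real) \<longlongrightarrow> a) at_top \<Longrightarrow> (f \<longlongrightarrow> b) at_top \<Longrightarrow> a = b"
  by (rule tendsto_unique[OF trivial_limit_at_top_linorder])

lemma ud_shift:
  fixes F :: "real \<Rightarrow> real"
  assumes "((\<lambda>t. F t / t powi a) \<longlongrightarrow> L) at_top" "a < b"
  shows "((\<lambda>t. F t / t powi b) \<longlongrightarrow> 0) at_top"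
proof -
  have z: "((\<lambda>t::real. t powi (a - b)) \<longlongrightarrow> 0) at_top"
    by (rule powi_neg_tendsto) (use assms(2) in simp)
  have "((\<lambda>t. (F t / t powi a) * t powi (a - b)) \<longlongrightarrow> L * 0) at_top"
    by (rule tendsto_mult[OF assms(1) z])
  hence 1: "((\<lambda>t. (F t / t powi a) * t powi (a - b)) \<longlongrightarrow> 0) at_top" by simp
  have "eventually (\<lambda>t. (F t / t powi a) * t powi (a - b) = F t / t powi b) at_top"
    using ev_pos by eventually_elim (simp add: power_int_diff)
  from Lim_transform_eventually[OF 1 this] show ?thesis .
qed

lemma ud_unique: assumes "ud F a" "ud F b" shows "a = b"
proof (rule ccontr)
  assume ne: "a \<noteq> b"
  obtain L1 L2 where L: "L1 > 0" "L2 > 0" "((\<lambda>t. F t / t powi a) \<longlongrightarrow> L1) at_top"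
    "((\<lambda>t. F t / t powi b) \<longlongrightarrow> L2) at_top" using assms unfolding ud_def by blast
  show False
  proof (cases "a < b")
    case True
    have "0 = L2" using lim_uniq[OF ud_shift[OF L(3) True] L(4)] .
    thus False using L(2) by simp
  next
    case False
    hence ba: "b < a" using ne by auto
    have "0 = L1" using lim_uniq[OF ud_shift[OF L(4) ba] L(3)] .
    thus False using L(1) by simp
  qed
qed

lemma UD_eqI:
  assumes "ud (\<lambda>t. f (t powi k) (\<lambda>j. t powi (n ! j))) d"
  shows "UD f k n = d"
  unfolding UD_def
proof (rule the_equality)
  obtain L1 where L1: "L1 > 0" "((\<lambda>t. f (t powi k) (\<lambda>j. t powi (n ! j)) / t powi d) \<longlongrightarrow> L1) at_top"
    using assms unfolding ud_def by blast
  show "\<exists>L. L \<noteq> 0 \<and> ((\<lambda>t. f (t powi k) (\<lambda>j. t powi (n ! j)) / t powi d) \<longlongrightarrow> L) at_top"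
    using L1 by (intro exI[of _ L1]) simp
  fix d' assume "\<exists>L. L \<noteq> 0 \<and> ((\<lambda>t. f (t powi k) (\<lambda>j. t powi (n ! j)) / t powi d') \<longlongrightarrow> L) at_top"
  then obtain L where L: "L \<noteq> 0" "((\<lambda>t. f (t powi k) (\<lambda>j. t powi (n ! j)) / t powi d') \<longlongrightarrow> L) at_top"
    by blast
  show "d' = d"
  proof (rule ccontr)
    assume "d' \<noteq> d"
    hence "d' < d \<or> d < d'" by auto
    thus False
    proof
      assume "d' < d"
      have "0 = L1" using lim_uniq[OF ud_shift[OF L(2) \<open>d' < d\<close>] L1(2)] .
      thus False using L1(1) by simp
    next
      assume "d < d'"
      have "0 = L" using lim_uniq[OF ud_shift[OF L1(2) \<open>d < d'\<close>] L(2)] .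
      thus False using L(1) by simp
    qed
  qed
qed

lemma ud_powi: "ud (\<lambda>t. t powi e) e"
  unfolding ud_def
proof (intro exI conjI)
  have "eventually (\<lambda>t::real. 1 = t powi e / t powi e) at_top"
    using ev_pos by eventually_elim simp
  from Lim_transform_eventually[OF tendsto_const this]
  show "((\<lambda>t::real. t powi e / t powi e) \<longlongrightarrow> 1) at_top" .
qed simp

lemma ud_const: "(c::real) > 0 \<Longrightarrow> ud (\<lambda>t. c) 0"
  unfolding ud_def by (intro exI[of _ c]) auto

lemma ud_mult: assumes "ud F a" "ud G b" shows "ud (\<lambda>t. F t * G t) (a + b)"
proof -
  obtain L1 L2 where L: "L1 > 0" "L2 > 0" "((\<lambda>t. F t / t powi a) \<longlongrightarrow> L1) at_top"
    "((\<lambda>t. G t / t powi b) \<longlongrightarrow> L2) at_top" using assms unfolding ud_def by blast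
  have 1: "((\<lambda>t. (F t / t powi a) * (G t / t powi b)) \<longlongrightarrow> L1 * L2) at_top"
    by (rule tendsto_mult[OF L(3) L(4)])
  have "eventually (\<lambda>t. (F t / t powi a) * (G t / t powi b) = F t * G t / t powi (a+b)) at_top"
    using ev_pos by eventually_elim (simp add: power_int_add)
  from Lim_transform_eventually[OF 1 this] L show ?thesis unfolding ud_def
    by (intro exI[of _ "L1*L2"]) simp
qed

lemma ud_divide: assumes "ud F a" "ud G b" shows "ud (\<lambda>t. F t / G t) (a - b)"
proof -
  obtain L1 L2 where L: "L1 > 0" "L2 > 0" "((\<lambda>t. F t / t powi a) \<longlongrightarrow> L1) at_top"
    "((\<lambda>t. G t / t powi b) \<longlongrightarrow> L2) at_top" using assms unfolding ud_def by blast
  have 1: "((\<lambda>t. (F t / t powi a) / (G t / t powi b)) \<longlongrightarrow> L1 / L2) at_top"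
    by (rule tendsto_divide[OF L(3) L(4)]) (use L(2) in simp)
  have "eventually (\<lambda>t. (F t / t powi a) / (G t / t powi b) = (F t / G t) / t powi (a-b)) at_top"
    using ev_pos by eventually_elim (simp add: power_int_diff)
  from Lim_transform_eventually[OF 1 this] L show ?thesis unfolding ud_def
    by (intro exI[of _ "L1/L2"]) simp
qed

lemma ud_add: assumes "ud F a" "ud G b" shows "ud (\<lambda>t. F t + G t) (max a b)"
proof -
  obtain L1 L2 where L: "L1 > 0" "L2 > 0" "((\<lambda>t. F t / t powi a) \<longlongrightarrow> L1) at_top"
    "((\<lambda>t. G t / t powi b) \<longlongrightarrow> L2) at_top" using assms unfolding ud_def by blast
  define m where "m = max a b"
  have A: "((\<lambda>t. F t / t powi m) \<longlongrightarrow> (if a = m then L1 else 0)) at_top"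
  proof (cases "a = m")
    case True thus ?thesis using L(3) by simp
  next
    case False hence "a < m" by (simp add: m_def)
    thus ?thesis using ud_shift[OF L(3)] False by simp
  qed
  have B: "((\<lambda>t. G t / t powi m) \<longlongrightarrow> (if b = m then L2 else 0)) at_top"
  proof (cases "b = m")
    case True thus ?thesis using L(4) by simp
  next
    case False hence "b < m" by (simp add: m_def)
    thus ?thesis using ud_shift[OF L(4)] False by simp
  qed
  have 1: "((\<lambda>t. F t / t powi m + G t / t powi m) \<longlongrightarrow> (if a = m then L1 else 0) + (if b = m then L2 else 0)) at_top"
    by (rule tendsto_add[OF A B])
  have "eventually (\<lambda>t. F t / t powi m + G t / t powi m = (F t + G t) / t powi m) at_top"
    by (simp add: add_divide_distrib)
  note 2 = Lim_transform_eventually[OF 1 this]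
  have "(if a = m then L1 else 0) + (if b = m then L2 else 0) > 0"
    using L(1,2) by (simp add: m_def max_def)
  with 2 show ?thesis unfolding ud_def m_def by blast
qed

lemma ud_power: assumes "ud F a" shows "ud (\<lambda>t. F t ^ m) (int m * a)"
proof -
  obtain L1 where L: "L1 > 0" "((\<lambda>t. F t / t powi a) \<longlongrightarrow> L1) at_top"
    using assms unfolding ud_def by blast
  have 1: "((\<lambda>t. (F t / t powi a) ^ m) \<longlongrightarrow> L1 ^ m) at_top"
    by (rule tendsto_power[OF L(2)])
  have "eventually (\<lambda>t. (F t / t powi a) ^ m = F t ^ m / t powi (int m * a)) at_top"
    using ev_pos by eventually_elim (simp add: power_divide power_int_power' mult.commute)
  from Lim_transform_eventually[OF 1 this] L show ?thesis unfolding ud_def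
    by (intro exI[of _ "L1^m"]) simp
qed

lemma ud_eq: "ud F a \<Longrightarrow> a = b \<Longrightarrow> ud F b" by simp

lemma ud_num: "ud (\<lambda>t. numeral w) 0" by (rule ud_const) simp
lemma ud_one: "ud (\<lambda>t. 1) 0" by (rule ud_const) simp
lemmas udr = ud_add ud_mult ud_divide ud_power ud_powi ud_num ud_one

lemma nth6: "[a,b,c,d,e,f]!0 = a" "[a,b,c,d,e,f]!1 = b" "[a,b,c,d,e,f]!2 = c"
  "[a,b,c,d,e,f]!3 = d" "[a,b,c,d,e,f]!4 = e" "[a,b,c,d,e,f]!5 = f"
  by (simp_all add: numeral_eq_Suc)

lemma geoR11: "geoR 1 1 c x = (c*(x 0 / x 1) + x 0 * x 2^3 / (x 1^2 * x 3) + x 0 * x 2^3 * x 4^3 / (x 1^2 * x 3^2 * x 5))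
   / (x 0 / x 1 + x 0 * x 2^3 / (x 1^2 * x 3) + x 0 * x 2^3 * x 4^3 / (x 1^2 * x 3^2 * x 5))"
  by (simp add: geoR_def Let_def)



definition m6 :: "int \<Rightarrow> int \<Rightarrow> int \<Rightarrow> int \<Rightarrow> int \<Rightarrow> int \<Rightarrow> int" where
  "m6 a b c d e f = max a (max b (max c (max d (max e f))))"

definition EE :: "int \<Rightarrow> int \<Rightarrow> int \<Rightarrow> int \<Rightarrow> int" where
  "EE z1 z2 z3 z4 = m6 0 z1 (z1+z2) (z1+z2+3*z4) (z1+z2+z3+3*z4) (2*z1+z2+z3+3*z4)"
definition DD :: "int \<Rightarrow> int \<Rightarrow> int \<Rightarrow> int \<Rightarrow> int \<Rightarrow> int" where
  "DD k z1 z2 z3 z4 = m6 0 (z1+k) (z1+z2+k) (z1+z2+3*z4+k) (z1+z2+z3+3*z4+k) (2*z1+z2+z3+3*z4+2*k)"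
definition FF :: "int \<Rightarrow> int \<Rightarrow> int \<Rightarrow> int \<Rightarrow> int \<Rightarrow> int" where
  "FF k z1 z2 z3 z4 = m6 0 z1 (z1+z2+k) (z1+z2+3*z4+k) (z1+z2+z3+3*z4+k) (2*z1+z2+z3+3*z4+k)"
definition GG :: "int \<Rightarrow> int \<Rightarrow> int \<Rightarrow> int \<Rightarrow> int \<Rightarrow> int" where
  "GG k z1 z2 z3 z4 = m6 0 z1 (z1+z2) (z1+z2+3*z4+k) (z1+z2+z3+3*z4+k) (2*z1+z2+z3+3*z4+k)"
definition HH :: "int \<Rightarrow> int \<Rightarrow> int \<Rightarrow> int \<Rightarrow> int \<Rightarrow> int" where
  "HH k z1 z2 z3 z4 = m6 0 z1 (z1+z2) (z1+z2+3*z4) (z1+z2+z3+3*z4+k) (2*z1+z2+z3+3*z4+k)"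

abbreviation "XX t n0 n1 n2 n3 n4 n5 \<equiv> (\<lambda>j. t powi ([n0,n1,n2,n3,n4,n5]!j))"

lemma udD: "ud (\<lambda>t. polyD (t powi k) (XX t n0 n1 n2 n3 n4 n5))
    ((n1+3*n2+2*n3+n5) + DD k (n0-n1-n5) (n1-3*n2+n3) (n3-3*n4+n5) (n2-n3+n4))"
  apply (rule ud_eq)
   apply (unfold polyD_def nth6)
   apply (rule udr)+
  apply (unfold DD_def m6_def)
  apply (simp only: max_add_distrib_right max_add_distrib_left)
  apply (rule antisym)
   subgoal by (simp only: max.bounded_iff, (intro conjI)?; simp only: le_max_iff_disj; arith)
  subgoal by (simp only: max.bounded_iff, (intro conjI)?; simp only: le_max_iff_disj; arith)
  done

lemma udE: "ud (\<lambda>t. polyE c (XX t n0 n1 n2 n3 n4 n5))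
    ((n1+3*n2+2*n3+n5) + EE (n0-n1-n5) (n1-3*n2+n3) (n3-3*n4+n5) (n2-n3+n4))"
  apply (rule ud_eq)
   apply (unfold polyE_def nth6)
   apply (rule udr)+
  apply (unfold EE_def m6_def)
  apply (simp only: max_add_distrib_right max_add_distrib_left)
  apply (rule antisym)
   subgoal by (simp only: max.bounded_iff, (intro conjI)?; simp only: le_max_iff_disj; arith)
  subgoal by (simp only: max.bounded_iff, (intro conjI)?; simp only: le_max_iff_disj; arith)
  done

lemma udF: "ud (\<lambda>t. polyF (t powi k) (XX t n0 n1 n2 n3 n4 n5))
    ((n1+3*n2+2*n3+n5) + FF k (n0-n1-n5) (n1-3*n2+n3) (n3-3*n4+n5) (n2-n3+n4))"
  apply (rule ud_eq)
   apply (unfold polyF_def nth6)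
   apply (rule udr)+
  apply (unfold FF_def m6_def)
  apply (simp only: max_add_distrib_right max_add_distrib_left)
  apply (rule antisym)
   subgoal by (simp only: max.bounded_iff, (intro conjI)?; simp only: le_max_iff_disj; arith)
  subgoal by (simp only: max.bounded_iff, (intro conjI)?; simp only: le_max_iff_disj; arith)
  done

lemma udG: assumes "k = 1 \<or> k = -1" shows "ud (\<lambda>t. polyG (t powi k) (XX t n0 n1 n2 n3 n4 n5))
    ((n1+3*n2+2*n3+n5) + GG k (n0-n1-n5) (n1-3*n2+n3) (n3-3*n4+n5) (n2-n3+n4))"
  apply (rule ud_eq)
   apply (unfold polyG_def nth6)
   apply (rule udr)+
  apply (unfold GG_def m6_def)
  apply (insert assms)
  apply (simp only: max_add_distrib_right max_add_distrib_left)
  apply (rule antisym)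
   subgoal by (simp only: max.bounded_iff, (intro conjI)?; simp only: le_max_iff_disj; arith)
  subgoal by (simp only: max.bounded_iff, (intro conjI)?; simp only: le_max_iff_disj; arith)
  done

lemma udH: "ud (\<lambda>t. polyH (t powi k) (XX t n0 n1 n2 n3 n4 n5))
    ((n1+3*n2+2*n3+n5) + HH k (n0-n1-n5) (n1-3*n2+n3) (n3-3*n4+n5) (n2-n3+n4))"
  apply (rule ud_eq)
   apply (unfold polyH_def nth6)
   apply (rule udr)+
  apply (unfold HH_def m6_def)
  apply (simp only: max_add_distrib_right max_add_distrib_left)
  apply (rule antisym)
   subgoal by (simp only: max.bounded_iff, (intro conjI)?; simp only: le_max_iff_disj; arith)
  subgoal by (simp only: max.bounded_iff, (intro conjI)?; simp only: le_max_iff_disj; arith)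
  done

lemma m6_ge: "a \<le> m6 a b c d e f" "b \<le> m6 a b c d e f" "c \<le> m6 a b c d e f"
  "d \<le> m6 a b c d e f" "e \<le> m6 a b c d e f" "f \<le> m6 a b c d e f"
  by (simp_all add: m6_def)

lemma m6_cases: "m6 a b c d e f = a \<or> m6 a b c d e f = b \<or> m6 a b c d e f = c \<or>
  m6 a b c d e f = d \<or> m6 a b c d e f = e \<or> m6 a b c d e f = f"
  by (simp add: m6_def max_def)

lemma m6_eqI: "a \<le> x \<Longrightarrow> b \<le> x \<Longrightarrow> c \<le> x \<Longrightarrow> d \<le> x \<Longrightarrow> e \<le> x \<Longrightarrow> f \<le> x \<Longrightarrow>
  (a = x \<or> b = x \<or> c = x \<or> d = x \<or> e = x \<or> f = x) \<Longrightarrow> m6 a b c d e f = (x::int)"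
  unfolding m6_def by (elim disjE) (simp_all add: max_def)

definition dvecE :: "int \<Rightarrow> int \<Rightarrow> int \<Rightarrow> int \<Rightarrow> int list" where
  "dvecE z1 z2 z3 z4 = (if z1+z2+z3+3*z4 < 0 \<and> z1+z2+3*z4 < 0 \<and> z1+z2 < 0 \<and> z1 < 0 then [-1,0,0,0,0,0] else (if z1+z2+z3+3*z4 < 0 \<and> z2+3*z4 < 0 \<and> z2 < 0 \<and> z1 \<ge> 0 then [0,0,-1,-1,0,1] else (if z1+z3+3*z4 < 0 \<and> z3+3*z4 < 0 \<and> z4 < 0 \<and> z2 \<ge> 0 \<and> z1+z2 \<ge> 0 then [0,0,-2,0,1,0] else (if z1+z2+3*z4 \<ge> 0 \<and> z2+3*z4 \<ge> 0 \<and> z4 \<ge> 0 \<and> z3 < 0 \<and> z1+z3 < 0 then [0,-1,0,2,0,0] else (if z1+z2+z3+3*z4 \<ge> 0 \<and> z3+3*z4 \<ge> 0 \<and> z3 \<ge> 0 \<and> z1 < 0 then [-1,0,1,1,0,0] else [0,0,0,0,0,1])))))"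

definition dvecF :: "int \<Rightarrow> int \<Rightarrow> int \<Rightarrow> int \<Rightarrow> int list" where
  "dvecF z1 z2 z3 z4 = (if z1+z2+z3+3*z4 \<le> 0 \<and> z1+z2+3*z4 \<le> 0 \<and> z1+z2 \<le> 0 \<and> z1 \<le> 0 then [1,0,0,0,0,0] else (if z1+z2+z3+3*z4 \<le> 0 \<and> z2+3*z4 \<le> 0 \<and> z2 \<le> 0 \<and> z1 > 0 then [0,0,1,1,0,-1] else (if z1+z3+3*z4 \<le> 0 \<and> z3+3*z4 \<le> 0 \<and> z4 \<le> 0 \<and> z2 > 0 \<and> z1+z2 > 0 then [0,0,2,0,-1,0] else (if z1+z2+3*z4 > 0 \<and> z2+3*z4 > 0 \<and> z4 > 0 \<and> z3 \<le> 0 \<and> z1+z3 \<le> 0 then [0,1,0,-2,0,0] else (if z1+z2+z3+3*z4 > 0 \<and> z3+3*z4 > 0 \<and> z3 > 0 \<and> z1 \<le> 0 then [1,0,-1,-1,0,0] else [0,0,0,0,0,-1])))))"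

lemma e0core: "dvecE z1 z2 z3 z4 = [(DD 1 z1 z2 z3 z4 - 1 - HH 1 z1 z2 z3 z4), (DD 1 z1 z2 z3 z4 - 1 - GG 1 z1 z2 z3 z4) - (DD 1 z1 z2 z3 z4 - 1 - HH 1 z1 z2 z3 z4), (DD 1 z1 z2 z3 z4 + HH 1 z1 z2 z3 z4 - (2*1 + EE z1 z2 z3 z4 + FF 1 z1 z2 z3 z4)) - 2*(DD 1 z1 z2 z3 z4 - 1 - GG 1 z1 z2 z3 z4), 2*(GG 1 z1 z2 z3 z4 - 1 - EE z1 z2 z3 z4) - (DD 1 z1 z2 z3 z4 + HH 1 z1 z2 z3 z4 - (2*1 + EE z1 z2 z3 z4 + FF 1 z1 z2 z3 z4)), (FF 1 z1 z2 z3 z4 - 1 - EE z1 z2 z3 z4) - (GG 1 z1 z2 z3 z4 - 1 - EE z1 z2 z3 z4), (DD 1 z1 z2 z3 z4 - 1 - EE z1 z2 z3 z4) - (FF 1 z1 z2 z3 z4 - 1 - EE z1 z2 z3 z4)]"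
proof -
  have ge: "0 \<le> EE z1 z2 z3 z4" "z1 \<le> EE z1 z2 z3 z4" "z1+z2 \<le> EE z1 z2 z3 z4" "z1+z2+3*z4 \<le> EE z1 z2 z3 z4" "z1+z2+z3+3*z4 \<le> EE z1 z2 z3 z4" "2*z1+z2+z3+3*z4 \<le> EE z1 z2 z3 z4"
    unfolding EE_def by (rule m6_ge)+
  consider (c5)  "EE z1 z2 z3 z4 = 2*z1+z2+z3+3*z4" | (c4) "EE z1 z2 z3 z4 \<noteq> 2*z1+z2+z3+3*z4" "EE z1 z2 z3 z4 = z1+z2+z3+3*z4" | (c3) "EE z1 z2 z3 z4 \<noteq> 2*z1+z2+z3+3*z4" "EE z1 z2 z3 z4 \<noteq> z1+z2+z3+3*z4" "EE z1 z2 z3 z4 = z1+z2+3*z4" | (c2) "EE z1 z2 z3 z4 \<noteq> 2*z1+z2+z3+3*z4" "EE z1 z2 z3 z4 \<noteq> z1+z2+z3+3*z4" "EE z1 z2 z3 z4 \<noteq> z1+z2+3*z4" "EE z1 z2 z3 z4 = z1+z2" | (c1) "EE z1 z2 z3 z4 \<noteq> 2*z1+z2+z3+3*z4" "EE z1 z2 z3 z4 \<noteq> z1+z2+z3+3*z4" "EE z1 z2 z3 z4 \<noteq> z1+z2+3*z4" "EE z1 z2 z3 z4 \<noteq> z1+z2" "EE z1 z2 z3 z4 = z1" | (c0) "EE z1 z2 z3 z4 \<noteq> 2*z1+z2+z3+3*z4" "EE z1 z2 z3 z4 \<noteq> z1+z2+z3+3*z4" "EE z1 z2 z3 z4 \<noteq>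 z1+z2+3*z4" "EE z1 z2 z3 z4 \<noteq> z1+z2" "EE z1 z2 z3 z4 \<noteq> z1" "EE z1 z2 z3 z4 = 0"
    using m6_cases[of "0" "z1" "z1+z2" "z1+z2+3*z4" "z1+z2+z3+3*z4" "2*z1+z2+z3+3*z4"] unfolding EE_def by blast
  then show ?thesis
  proof cases
    case c0
    note h = c0 ge
    have DD: "DD 1 z1 z2 z3 z4 = (0) + (0)" unfolding DD_def by (rule m6_eqI) (use h in arith)+
    have FF: "FF 1 z1 z2 z3 z4 = (0) + (0)" unfolding FF_def by (rule m6_eqI) (use h in arith)+
    have GG: "GG 1 z1 z2 z3 z4 = (0) + (0)" unfolding GG_def by (rule m6_eqI) (use h in arith)+
    have HH: "HH 1 z1 z2 z3 z4 = (0) + (0)" unfolding HH_def by (rule m6_eqI) (use h in arith)+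
    have EEv: "EE z1 z2 z3 z4 = 0" using h by linarith
    have p: "z1+z2+z3+3*z4 < 0 \<and> z1+z2+3*z4 < 0 \<and> z1+z2 < 0 \<and> z1 < 0" using h by arith
    show ?thesis unfolding dvecE_def if_P[OF p] DD FF GG HH EEv by simp
  next
    case c1
    note h = c1 ge
    have DD: "DD 1 z1 z2 z3 z4 = (z1) + (1)" unfolding DD_def by (rule m6_eqI) (use h in arith)+
    have FF: "FF 1 z1 z2 z3 z4 = (z1) + (0)" unfolding FF_def by (rule m6_eqI) (use h in arith)+
    have GG: "GG 1 z1 z2 z3 z4 = (z1) + (0)" unfolding GG_def by (rule m6_eqI) (use h in arith)+
    have HH: "HH 1 z1 z2 z3 z4 = (z1) + (0)" unfolding HH_def by (rule m6_eqI) (use h in arith)+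
    have EEv: "EE z1 z2 z3 z4 = z1" using h by linarith
    have n0: "\<not> (z1+z2+z3+3*z4 < 0 \<and> z1+z2+3*z4 < 0 \<and> z1+z2 < 0 \<and> z1 < 0)" using h by arith
    have p: "z1+z2+z3+3*z4 < 0 \<and> z2+3*z4 < 0 \<and> z2 < 0 \<and> z1 \<ge> 0" using h by arith
    show ?thesis unfolding dvecE_def if_not_P[OF n0] if_P[OF p] DD FF GG HH EEv by simp
  next
    case c2
    note h = c2 ge
    have DD: "DD 1 z1 z2 z3 z4 = (z1+z2) + (1)" unfolding DD_def by (rule m6_eqI) (use h in arith)+
    have FF: "FF 1 z1 z2 z3 z4 = (z1+z2) + (1)" unfolding FF_def by (rule m6_eqI) (use h in arith)+
    have GG: "GG 1 z1 z2 z3 z4 = (z1+z2) + (0)" unfolding GG_def by (rule m6_eqI) (use h in arith)+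
    have HH: "HH 1 z1 z2 z3 z4 = (z1+z2) + (0)" unfolding HH_def by (rule m6_eqI) (use h in arith)+
    have EEv: "EE z1 z2 z3 z4 = z1+z2" using h by linarith
    have n0: "\<not> (z1+z2+z3+3*z4 < 0 \<and> z1+z2+3*z4 < 0 \<and> z1+z2 < 0 \<and> z1 < 0)" using h by arith
    have n1: "\<not> (z1+z2+z3+3*z4 < 0 \<and> z2+3*z4 < 0 \<and> z2 < 0 \<and> z1 \<ge> 0)" using h by arith
    have p: "z1+z3+3*z4 < 0 \<and> z3+3*z4 < 0 \<and> z4 < 0 \<and> z2 \<ge> 0 \<and> z1+z2 \<ge> 0" using h by arith
    show ?thesis unfolding dvecE_def if_not_P[OF n0] if_not_P[OF n1] if_P[OF p] DD FF GG HH EEv by simp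
  next
    case c3
    note h = c3 ge
    have DD: "DD 1 z1 z2 z3 z4 = (z1+z2+3*z4) + (1)" unfolding DD_def by (rule m6_eqI) (use h in arith)+
    have FF: "FF 1 z1 z2 z3 z4 = (z1+z2+3*z4) + (1)" unfolding FF_def by (rule m6_eqI) (use h in arith)+
    have GG: "GG 1 z1 z2 z3 z4 = (z1+z2+3*z4) + (1)" unfolding GG_def by (rule m6_eqI) (use h in arith)+
    have HH: "HH 1 z1 z2 z3 z4 = (z1+z2+3*z4) + (0)" unfolding HH_def by (rule m6_eqI) (use h in arith)+
    have EEv: "EE z1 z2 z3 z4 = z1+z2+3*z4" using h by linarith
    have n0: "\<not> (z1+z2+z3+3*z4 < 0 \<and> z1+z2+3*z4 < 0 \<and> z1+z2 < 0 \<and> z1 < 0)" using h by arith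
    have n1: "\<not> (z1+z2+z3+3*z4 < 0 \<and> z2+3*z4 < 0 \<and> z2 < 0 \<and> z1 \<ge> 0)" using h by arith
    have n2: "\<not> (z1+z3+3*z4 < 0 \<and> z3+3*z4 < 0 \<and> z4 < 0 \<and> z2 \<ge> 0 \<and> z1+z2 \<ge> 0)" using h by arith
    have p: "z1+z2+3*z4 \<ge> 0 \<and> z2+3*z4 \<ge> 0 \<and> z4 \<ge> 0 \<and> z3 < 0 \<and> z1+z3 < 0" using h by arith
    show ?thesis unfolding dvecE_def if_not_P[OF n0] if_not_P[OF n1] if_not_P[OF n2] if_P[OF p] DD FF GG HH EEv by simp
  next
    case c4
    note h = c4 ge
    have DD: "DD 1 z1 z2 z3 z4 = (z1+z2+z3+3*z4) + (1)" unfolding DD_def by (rule m6_eqI) (use h in arith)+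
    have FF: "FF 1 z1 z2 z3 z4 = (z1+z2+z3+3*z4) + (1)" unfolding FF_def by (rule m6_eqI) (use h in arith)+
    have GG: "GG 1 z1 z2 z3 z4 = (z1+z2+z3+3*z4) + (1)" unfolding GG_def by (rule m6_eqI) (use h in arith)+
    have HH: "HH 1 z1 z2 z3 z4 = (z1+z2+z3+3*z4) + (1)" unfolding HH_def by (rule m6_eqI) (use h in arith)+
    have EEv: "EE z1 z2 z3 z4 = z1+z2+z3+3*z4" using h by linarith
    have n0: "\<not> (z1+z2+z3+3*z4 < 0 \<and> z1+z2+3*z4 < 0 \<and> z1+z2 < 0 \<and> z1 < 0)" using h by arith
    have n1: "\<not> (z1+z2+z3+3*z4 < 0 \<and> z2+3*z4 < 0 \<and> z2 < 0 \<and> z1 \<ge> 0)" using h by arith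
    have n2: "\<not> (z1+z3+3*z4 < 0 \<and> z3+3*z4 < 0 \<and> z4 < 0 \<and> z2 \<ge> 0 \<and> z1+z2 \<ge> 0)" using h by arith
    have n3: "\<not> (z1+z2+3*z4 \<ge> 0 \<and> z2+3*z4 \<ge> 0 \<and> z4 \<ge> 0 \<and> z3 < 0 \<and> z1+z3 < 0)" using h by arith
    have p: "z1+z2+z3+3*z4 \<ge> 0 \<and> z3+3*z4 \<ge> 0 \<and> z3 \<ge> 0 \<and> z1 < 0" using h by arith
    show ?thesis unfolding dvecE_def if_not_P[OF n0] if_not_P[OF n1] if_not_P[OF n2] if_not_P[OF n3] if_P[OF p] DD FF GG HH EEv by simp
  next
    case c5
    note h = c5 ge
    have DD: "DD 1 z1 z2 z3 z4 = (2*z1+z2+z3+3*z4) + (2)" unfolding DD_def by (rule m6_eqI) (use h in arith)+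
    have FF: "FF 1 z1 z2 z3 z4 = (2*z1+z2+z3+3*z4) + (1)" unfolding FF_def by (rule m6_eqI) (use h in arith)+
    have GG: "GG 1 z1 z2 z3 z4 = (2*z1+z2+z3+3*z4) + (1)" unfolding GG_def by (rule m6_eqI) (use h in arith)+
    have HH: "HH 1 z1 z2 z3 z4 = (2*z1+z2+z3+3*z4) + (1)" unfolding HH_def by (rule m6_eqI) (use h in arith)+
    have EEv: "EE z1 z2 z3 z4 = 2*z1+z2+z3+3*z4" using h by linarith
    have n0: "\<not> (z1+z2+z3+3*z4 < 0 \<and> z1+z2+3*z4 < 0 \<and> z1+z2 < 0 \<and> z1 < 0)" using h by arith
    have n1: "\<not> (z1+z2+z3+3*z4 < 0 \<and> z2+3*z4 < 0 \<and> z2 < 0 \<and> z1 \<ge> 0)" using h by arith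
    have n2: "\<not> (z1+z3+3*z4 < 0 \<and> z3+3*z4 < 0 \<and> z4 < 0 \<and> z2 \<ge> 0 \<and> z1+z2 \<ge> 0)" using h by arith
    have n3: "\<not> (z1+z2+3*z4 \<ge> 0 \<and> z2+3*z4 \<ge> 0 \<and> z4 \<ge> 0 \<and> z3 < 0 \<and> z1+z3 < 0)" using h by arith
    have n4: "\<not> (z1+z2+z3+3*z4 \<ge> 0 \<and> z3+3*z4 \<ge> 0 \<and> z3 \<ge> 0 \<and> z1 < 0)" using h by arith
    show ?thesis unfolding dvecE_def if_not_P[OF n0] if_not_P[OF n1] if_not_P[OF n2] if_not_P[OF n3] if_not_P[OF n4] DD FF GG HH EEv by simp
  qed
qed

lemma f0core: "dvecF z1 z2 z3 z4 = [(DD (-1) z1 z2 z3 z4 - (-1) - HH (-1) z1 z2 z3 z4), (DD (-1) z1 z2 z3 z4 - (-1) - GG (-1) z1 z2 z3 z4) - (DD (-1) z1 z2 z3 z4 - (-1) - HH (-1) z1 z2 z3 z4), (DD (-1) z1 z2 z3 z4 + HH (-1) z1 z2 z3 z4 - (2*(-1) + EE z1 z2 z3 z4 + FF (-1) z1 z2 z3 z4)) - 2*(DD (-1) z1 z2 z3 z4 - (-1) - GG (-1) z1 z2 z3 z4), 2*(GG (-1) z1 z2 z3 z4 - (-1) - EE z1 z2 z3 z4) - (DD (-1) z1 z2 z3 z4 + HH (-1) z1 z2 z3 z4 - (2*(-1) + EE z1 z2 z3 z4 + FF (-1) z1 z2 z3 z4)), (FF (-1) z1 z2 z3 z4 - (-1)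 - EE z1 z2 z3 z4) - (GG (-1) z1 z2 z3 z4 - (-1) - EE z1 z2 z3 z4), (DD (-1) z1 z2 z3 z4 - (-1) - EE z1 z2 z3 z4) - (FF (-1) z1 z2 z3 z4 - (-1) - EE z1 z2 z3 z4)]"
proof -
  have ge: "0 \<le> EE z1 z2 z3 z4" "z1 \<le> EE z1 z2 z3 z4" "z1+z2 \<le> EE z1 z2 z3 z4" "z1+z2+3*z4 \<le> EE z1 z2 z3 z4" "z1+z2+z3+3*z4 \<le> EE z1 z2 z3 z4" "2*z1+z2+z3+3*z4 \<le> EE z1 z2 z3 z4"
    unfolding EE_def by (rule m6_ge)+
  consider (c0)  "EE z1 z2 z3 z4 = 0" | (c1) "EE z1 z2 z3 z4 \<noteq> 0" "EE z1 z2 z3 z4 = z1" | (c2) "EE z1 z2 z3 z4 \<noteq> 0" "EE z1 z2 z3 z4 \<noteq> z1" "EE z1 z2 z3 z4 = z1+z2" | (c3) "EE z1 z2 z3 z4 \<noteq> 0" "EE z1 z2 z3 z4 \<noteq> z1" "EE z1 z2 z3 z4 \<noteq> z1+z2" "EE z1 z2 z3 z4 = z1+z2+3*z4" | (c4) "EE z1 z2 z3 z4 \<noteq> 0" "EE z1 z2 z3 z4 \<noteq> z1" "EE z1 z2 z3 z4 \<noteq> z1+z2" "EE z1 z2 z3 z4 \<noteq> z1+z2+3*z4" "EE z1 z2 z3 z4 = z1+z2+z3+3*z4" | (c5) "EE z1 z2 z3 z4 \<noteq> 0" "EE z1 z2 z3 z4 \<noteq> z1" "EE z1 z2 z3 z4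 \<noteq> z1+z2" "EE z1 z2 z3 z4 \<noteq> z1+z2+3*z4" "EE z1 z2 z3 z4 \<noteq> z1+z2+z3+3*z4" "EE z1 z2 z3 z4 = 2*z1+z2+z3+3*z4"
    using m6_cases[of "0" "z1" "z1+z2" "z1+z2+3*z4" "z1+z2+z3+3*z4" "2*z1+z2+z3+3*z4"] unfolding EE_def by blast
  then show ?thesis
  proof cases
    case c0
    note h = c0 ge
    have DD: "DD (-1) z1 z2 z3 z4 = (0) + (0)" unfolding DD_def by (rule m6_eqI) (use h in arith)+
    have FF: "FF (-1) z1 z2 z3 z4 = (0) + (0)" unfolding FF_def by (rule m6_eqI) (use h in arith)+
    have GG: "GG (-1) z1 z2 z3 z4 = (0) + (0)" unfolding GG_def by (rule m6_eqI) (use h in arith)+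
    have HH: "HH (-1) z1 z2 z3 z4 = (0) + (0)" unfolding HH_def by (rule m6_eqI) (use h in arith)+
    have EEv: "EE z1 z2 z3 z4 = 0" using h by linarith
    have p: "z1+z2+z3+3*z4 \<le> 0 \<and> z1+z2+3*z4 \<le> 0 \<and> z1+z2 \<le> 0 \<and> z1 \<le> 0" using h by arith
    show ?thesis unfolding dvecF_def if_P[OF p] DD FF GG HH EEv by simp
  next
    case c1
    note h = c1 ge
    have DD: "DD (-1) z1 z2 z3 z4 = (z1) + (-1)" unfolding DD_def by (rule m6_eqI) (use h in arith)+
    have FF: "FF (-1) z1 z2 z3 z4 = (z1) + (0)" unfolding FF_def by (rule m6_eqI) (use h in arith)+
    have GG: "GG (-1) z1 z2 z3 z4 = (z1) + (0)" unfolding GG_def by (rule m6_eqI) (use h in arith)+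
    have HH: "HH (-1) z1 z2 z3 z4 = (z1) + (0)" unfolding HH_def by (rule m6_eqI) (use h in arith)+
    have EEv: "EE z1 z2 z3 z4 = z1" using h by linarith
    have n0: "\<not> (z1+z2+z3+3*z4 \<le> 0 \<and> z1+z2+3*z4 \<le> 0 \<and> z1+z2 \<le> 0 \<and> z1 \<le> 0)" using h by arith
    have p: "z1+z2+z3+3*z4 \<le> 0 \<and> z2+3*z4 \<le> 0 \<and> z2 \<le> 0 \<and> z1 > 0" using h by arith
    show ?thesis unfolding dvecF_def if_not_P[OF n0] if_P[OF p] DD FF GG HH EEv by simp
  next
    case c2
    note h = c2 ge
    have DD: "DD (-1) z1 z2 z3 z4 = (z1+z2) + (-1)" unfolding DD_def by (rule m6_eqI) (use h in arith)+
    have FF: "FF (-1) z1 z2 z3 z4 = (z1+z2) + (-1)" unfolding FF_def by (rule m6_eqI) (use h in arith)+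
    have GG: "GG (-1) z1 z2 z3 z4 = (z1+z2) + (0)" unfolding GG_def by (rule m6_eqI) (use h in arith)+
    have HH: "HH (-1) z1 z2 z3 z4 = (z1+z2) + (0)" unfolding HH_def by (rule m6_eqI) (use h in arith)+
    have EEv: "EE z1 z2 z3 z4 = z1+z2" using h by linarith
    have n0: "\<not> (z1+z2+z3+3*z4 \<le> 0 \<and> z1+z2+3*z4 \<le> 0 \<and> z1+z2 \<le> 0 \<and> z1 \<le> 0)" using h by arith
    have n1: "\<not> (z1+z2+z3+3*z4 \<le> 0 \<and> z2+3*z4 \<le> 0 \<and> z2 \<le> 0 \<and> z1 > 0)" using h by arith
    have p: "z1+z3+3*z4 \<le> 0 \<and> z3+3*z4 \<le> 0 \<and> z4 \<le> 0 \<and> z2 > 0 \<and> z1+z2 > 0" using h by arith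
    show ?thesis unfolding dvecF_def if_not_P[OF n0] if_not_P[OF n1] if_P[OF p] DD FF GG HH EEv by simp
  next
    case c3
    note h = c3 ge
    have DD: "DD (-1) z1 z2 z3 z4 = (z1+z2+3*z4) + (-1)" unfolding DD_def by (rule m6_eqI) (use h in arith)+
    have FF: "FF (-1) z1 z2 z3 z4 = (z1+z2+3*z4) + (-1)" unfolding FF_def by (rule m6_eqI) (use h in arith)+
    have GG: "GG (-1) z1 z2 z3 z4 = (z1+z2+3*z4) + (-1)" unfolding GG_def by (rule m6_eqI) (use h in arith)+
    have HH: "HH (-1) z1 z2 z3 z4 = (z1+z2+3*z4) + (0)" unfolding HH_def by (rule m6_eqI) (use h in arith)+
    have EEv: "EE z1 z2 z3 z4 = z1+z2+3*z4" using h by linarith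
    have n0: "\<not> (z1+z2+z3+3*z4 \<le> 0 \<and> z1+z2+3*z4 \<le> 0 \<and> z1+z2 \<le> 0 \<and> z1 \<le> 0)" using h by arith
    have n1: "\<not> (z1+z2+z3+3*z4 \<le> 0 \<and> z2+3*z4 \<le> 0 \<and> z2 \<le> 0 \<and> z1 > 0)" using h by arith
    have n2: "\<not> (z1+z3+3*z4 \<le> 0 \<and> z3+3*z4 \<le> 0 \<and> z4 \<le> 0 \<and> z2 > 0 \<and> z1+z2 > 0)" using h by arith
    have p: "z1+z2+3*z4 > 0 \<and> z2+3*z4 > 0 \<and> z4 > 0 \<and> z3 \<le> 0 \<and> z1+z3 \<le> 0" using h by arith
    show ?thesis unfolding dvecF_def if_not_P[OF n0] if_not_P[OF n1] if_not_P[OF n2] if_P[OF p] DD FF GG HH EEv by simp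
  next
    case c4
    note h = c4 ge
    have DD: "DD (-1) z1 z2 z3 z4 = (z1+z2+z3+3*z4) + (-1)" unfolding DD_def by (rule m6_eqI) (use h in arith)+
    have FF: "FF (-1) z1 z2 z3 z4 = (z1+z2+z3+3*z4) + (-1)" unfolding FF_def by (rule m6_eqI) (use h in arith)+
    have GG: "GG (-1) z1 z2 z3 z4 = (z1+z2+z3+3*z4) + (-1)" unfolding GG_def by (rule m6_eqI) (use h in arith)+
    have HH: "HH (-1) z1 z2 z3 z4 = (z1+z2+z3+3*z4) + (-1)" unfolding HH_def by (rule m6_eqI) (use h in arith)+
    have EEv: "EE z1 z2 z3 z4 = z1+z2+z3+3*z4" using h by linarith
    have n0: "\<not> (z1+z2+z3+3*z4 \<le> 0 \<and> z1+z2+3*z4 \<le> 0 \<and> z1+z2 \<le> 0 \<and> z1 \<le> 0)" using h by arith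
    have n1: "\<not> (z1+z2+z3+3*z4 \<le> 0 \<and> z2+3*z4 \<le> 0 \<and> z2 \<le> 0 \<and> z1 > 0)" using h by arith
    have n2: "\<not> (z1+z3+3*z4 \<le> 0 \<and> z3+3*z4 \<le> 0 \<and> z4 \<le> 0 \<and> z2 > 0 \<and> z1+z2 > 0)" using h by arith
    have n3: "\<not> (z1+z2+3*z4 > 0 \<and> z2+3*z4 > 0 \<and> z4 > 0 \<and> z3 \<le> 0 \<and> z1+z3 \<le> 0)" using h by arith
    have p: "z1+z2+z3+3*z4 > 0 \<and> z3+3*z4 > 0 \<and> z3 > 0 \<and> z1 \<le> 0" using h by arith
    show ?thesis unfolding dvecF_def if_not_P[OF n0] if_not_P[OF n1] if_not_P[OF n2] if_not_P[OF n3] if_P[OF p] DD FF GG HH EEv by simp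
  next
    case c5
    note h = c5 ge
    have DD: "DD (-1) z1 z2 z3 z4 = (2*z1+z2+z3+3*z4) + (-2)" unfolding DD_def by (rule m6_eqI) (use h in arith)+
    have FF: "FF (-1) z1 z2 z3 z4 = (2*z1+z2+z3+3*z4) + (-1)" unfolding FF_def by (rule m6_eqI) (use h in arith)+
    have GG: "GG (-1) z1 z2 z3 z4 = (2*z1+z2+z3+3*z4) + (-1)" unfolding GG_def by (rule m6_eqI) (use h in arith)+
    have HH: "HH (-1) z1 z2 z3 z4 = (2*z1+z2+z3+3*z4) + (-1)" unfolding HH_def by (rule m6_eqI) (use h in arith)+
    have EEv: "EE z1 z2 z3 z4 = 2*z1+z2+z3+3*z4" using h by linarith
    have n0: "\<not> (z1+z2+z3+3*z4 \<le> 0 \<and> z1+z2+3*z4 \<le> 0 \<and> z1+z2 \<le> 0 \<and> z1 \<le> 0)" using h by arith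
    have n1: "\<not> (z1+z2+z3+3*z4 \<le> 0 \<and> z2+3*z4 \<le> 0 \<and> z2 \<le> 0 \<and> z1 > 0)" using h by arith
    have n2: "\<not> (z1+z3+3*z4 \<le> 0 \<and> z3+3*z4 \<le> 0 \<and> z4 \<le> 0 \<and> z2 > 0 \<and> z1+z2 > 0)" using h by arith
    have n3: "\<not> (z1+z2+3*z4 > 0 \<and> z2+3*z4 > 0 \<and> z4 > 0 \<and> z3 \<le> 0 \<and> z1+z3 \<le> 0)" using h by arith
    have n4: "\<not> (z1+z2+z3+3*z4 > 0 \<and> z3+3*z4 > 0 \<and> z3 > 0 \<and> z1 \<le> 0)" using h by arith
    show ?thesis unfolding dvecF_def if_not_P[OF n0] if_not_P[OF n1] if_not_P[OF n2] if_not_P[OF n3] if_not_P[OF n4] DD FF GG HH EEv by simp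
  qed
qed

lemma polyE1: "polyE c x = polyE 1 x" by (simp add: polyE_def)

lemma geoR13: "geoR 1 3 c x = (c*(x 0 / x 1) + c*(x 0 * x 2^3 / (x 1^2 * x 3)) + x 0 * x 2^3 * x 4^3 / (x 1^2 * x 3^2 * x 5))
   / (c*(x 0 / x 1) + x 0 * x 2^3 / (x 1^2 * x 3) + x 0 * x 2^3 * x 4^3 / (x 1^2 * x 3^2 * x 5))"
  by (simp add: geoR_def Let_def)
lemma geoR15: "geoR 1 5 c x = c * (x 0 / x 1 + x 0 * x 2^3 / (x 1^2 * x 3) + x 0 * x 2^3 * x 4^3 / (x 1^2 * x 3^2 * x 5))
   / (c*(x 0 / x 1) + c*(x 0 * x 2^3 / (x 1^2 * x 3)) + x 0 * x 2^3 * x 4^3 / (x 1^2 * x 3^2 * x 5))"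
  by (simp add: geoR_def Let_def)
lemma geoR22: "geoR 2 2 c x = (c*(x 1 / x 2) + x 1 * x 3 / (x 2^2 * x 4)) / (x 1 / x 2 + x 1 * x 3 / (x 2^2 * x 4))"
  by (simp add: geoR_def Let_def)
lemma geoR24: "geoR 2 4 c x = c * (x 1 / x 2 + x 1 * x 3 / (x 2^2 * x 4)) / (c*(x 1 / x 2) + x 1 * x 3 / (x 2^2 * x 4))"
  by (simp add: geoR_def Let_def)
lemma geoR00: "geoR 0 0 c x = polyD c x / (c * polyE 1 x)"
  by (simp add: geoR_def polyE1[of c])
lemma geoR01: "geoR 0 1 c x = polyF c x / (c * polyE 1 x)"
  by (simp add: geoR_def polyE1[of c])
lemma geoR02: "geoR 0 2 c x = polyG c x / (c * polyE 1 x)"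
  by (simp add: geoR_def polyE1[of c])
lemma geoR03: "geoR 0 3 c x = polyD c x * polyH c x / (c^2 * polyE 1 x * polyF c x)"
  by (simp add: geoR_def polyE1[of c])
lemma geoR04: "geoR 0 4 c x = polyD c x / (c * polyG c x)"
  by (simp add: geoR_def)
lemma geoR05: "geoR 0 5 c x = polyD c x / (c * polyH c x)"
  by (simp add: geoR_def)

lemma UD_one: assumes "\<And>c x. f c x = 1" shows "UD f k n = 0"
proof -
  have "f = (\<lambda>c x. 1)" using assms by (intro ext) simp
  thus ?thesis by (simp add: UD_eqI ud_one)
qed

lemma UD1o: "UD (geoR 1 0) k n = 0" "UD (geoR 1 2) k n = 0" "UD (geoR 1 4) k n = 0"
  by (rule UD_one, simp add: geoR_def)+
lemma UD2o: "UD (geoR 2 0) k n = 0" "UD (geoR 2 1) k n = 0" "UD (geoR 2 3) k n = 0" "UD (geoR 2 5) k n = 0"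
  by (rule UD_one, simp add: geoR_def)+

abbreviation "AA n0 n1 \<equiv> n0 - n1"
abbreviation "BB n0 n1 n2 n3 \<equiv> n0+3*n2-2*n1-n3"
abbreviation "CC n0 n1 n2 n3 n4 n5 \<equiv> n0+3*n2+3*n4-2*n1-2*n3-n5"

lemma UD11: "UD (geoR 1 1) k [n0,n1,n2,n3,n4,n5] =
  max (k + AA n0 n1) (max (BB n0 n1 n2 n3) (CC n0 n1 n2 n3 n4 n5))
  - max (AA n0 n1) (max (BB n0 n1 n2 n3) (CC n0 n1 n2 n3 n4 n5))"
  apply (rule UD_eqI, rule ud_eq, unfold geoR11 nth6)
   apply (rule udr)+
  apply (simp add: algebra_simps)
  done
lemma UD13: "UD (geoR 1 3) k [n0,n1,n2,n3,n4,n5] =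
  max (k + AA n0 n1) (max (k + BB n0 n1 n2 n3) (CC n0 n1 n2 n3 n4 n5))
  - max (k + AA n0 n1) (max (BB n0 n1 n2 n3) (CC n0 n1 n2 n3 n4 n5))"
  apply (rule UD_eqI, rule ud_eq, unfold geoR13 nth6)
   apply (rule udr)+
  apply (simp add: algebra_simps)
  done
lemma UD15: "UD (geoR 1 5) k [n0,n1,n2,n3,n4,n5] =
  k + max (AA n0 n1) (max (BB n0 n1 n2 n3) (CC n0 n1 n2 n3 n4 n5))
  - max (k + AA n0 n1) (max (k + BB n0 n1 n2 n3) (CC n0 n1 n2 n3 n4 n5))"
  apply (rule UD_eqI, rule ud_eq, unfold geoR15 nth6)
   apply (rule udr)+
  apply (simp add: algebra_simps)
  done
lemma UD22: "UD (geoR 2 2) k [n0,n1,n2,n3,n4,n5] =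
  max (k + (n1-n2)) (n1+n3-2*n2-n4) - max (n1-n2) (n1+n3-2*n2-n4)"
  apply (rule UD_eqI, rule ud_eq, unfold geoR22 nth6)
   apply (rule udr)+
  apply (simp add: algebra_simps)
  done
lemma UD24: "UD (geoR 2 4) k [n0,n1,n2,n3,n4,n5] =
  k + max (n1-n2) (n1+n3-2*n2-n4) - max (k + (n1-n2)) (n1+n3-2*n2-n4)"
  apply (rule UD_eqI, rule ud_eq, unfold geoR24 nth6)
   apply (rule udr)+
  apply (simp add: algebra_simps)
  done

abbreviation "ZZ Q n0 n1 n2 n3 n4 n5 \<equiv> Q (n0-n1-n5) (n1-3*n2+n3) (n3-3*n4+n5) (n2-n3+n4)"

lemma UD00: "UD (geoR 0 0) k [n0,n1,n2,n3,n4,n5] = ZZ (DD k) n0 n1 n2 n3 n4 n5 - k - ZZ EE n0 n1 n2 n3 n4 n5"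
  apply (rule UD_eqI, rule ud_eq, unfold geoR00)
   apply (rule udr udD udE)+
  apply (simp add: algebra_simps)
  done
lemma UD01: "UD (geoR 0 1) k [n0,n1,n2,n3,n4,n5] = ZZ (FF k) n0 n1 n2 n3 n4 n5 - k - ZZ EE n0 n1 n2 n3 n4 n5"
  apply (rule UD_eqI, rule ud_eq, unfold geoR01)
   apply (rule udr udF udE)+
  apply (simp add: algebra_simps)
  done
lemma UD02: assumes "k = 1 \<or> k = -1"
  shows "UD (geoR 0 2) k [n0,n1,n2,n3,n4,n5] = ZZ (GG k) n0 n1 n2 n3 n4 n5 - k - ZZ EE n0 n1 n2 n3 n4 n5"
  apply (rule UD_eqI, rule ud_eq, unfold geoR02)
   apply (rule udr udG[OF assms] udE)+
  apply (simp add: algebra_simps)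
  done
lemma UD03: "UD (geoR 0 3) k [n0,n1,n2,n3,n4,n5] = ZZ (DD k) n0 n1 n2 n3 n4 n5 + ZZ (HH k) n0 n1 n2 n3 n4 n5
   - (2*k + ZZ EE n0 n1 n2 n3 n4 n5 + ZZ (FF k) n0 n1 n2 n3 n4 n5)"
  apply (rule UD_eqI, rule ud_eq, unfold geoR03)
   apply (rule udr udD udE udF udH)+
  apply (simp add: algebra_simps)
  done
lemma UD04: assumes "k = 1 \<or> k = -1"
  shows "UD (geoR 0 4) k [n0,n1,n2,n3,n4,n5] = ZZ (DD k) n0 n1 n2 n3 n4 n5 - k - ZZ (GG k) n0 n1 n2 n3 n4 n5"
  apply (rule UD_eqI, rule ud_eq, unfold geoR04)
   apply (rule udr udD udG[OF assms])+
  apply (simp add: algebra_simps)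
  done
lemma UD05: "UD (geoR 0 5) k [n0,n1,n2,n3,n4,n5] = ZZ (DD k) n0 n1 n2 n3 n4 n5 - k - ZZ (HH k) n0 n1 n2 n3 n4 n5"
  apply (rule UD_eqI, rule ud_eq, unfold geoR05)
   apply (rule udr udD udH)+
  apply (simp add: algebra_simps)
  done

lemma geoEps1: "geoEps 1 x = x 0 / x 1 + x 0 * x 2^3 / (x 1^2 * x 3) + x 0 * x 2^3 * x 4^3 / (x 1^2 * x 3^2 * x 5)"
  by (simp add: geoEps_def)
lemma geoEps2: "geoEps 2 x = x 1 / x 2 + x 1 * x 3 / (x 2^2 * x 4)"
  by (simp add: geoEps_def)
lemma geoEps0: "geoEps 0 x = polyE 1 x / (x 0^3 * x 2^3 * x 3)"
  by (simp add: geoEps_def)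
lemma geoGamma1: "geoGamma 1 x = x 1^2 * x 3^2 * x 5^2 / (x 0 * x 2^3 * x 4^3)"
  by (simp add: geoGamma_def)
lemma geoGamma2: "geoGamma 2 x = x 2^2 * x 4^2 / (x 1 * x 3 * x 5)"
  by (simp add: geoGamma_def)
lemma geoGamma0: "geoGamma 0 x = x 0^2 / (x 1 * x 3 * x 5)"
  by (simp add: geoGamma_def)

lemma eps1: "epsX 1 [n0,n1,n2,n3,n4,n5] = max (max (AA n0 n1) (BB n0 n1 n2 n3)) (CC n0 n1 n2 n3 n4 n5)"
  unfolding epsX_def
  apply (rule UD_eqI, rule ud_eq, unfold geoEps1 nth6)
   apply (rule udr)+
  apply (simp add: algebra_simps)
  done
lemma eps2: "epsX 2 [n0,n1,n2,n3,n4,n5] = max (n1-n2) (n1+n3-2*n2-n4)"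
  unfolding epsX_def
  apply (rule UD_eqI, rule ud_eq, unfold geoEps2 nth6)
   apply (rule udr)+
  apply (simp add: algebra_simps)
  done
lemma eps0: "epsX 0 [n0,n1,n2,n3,n4,n5] = ZZ EE n0 n1 n2 n3 n4 n5 + n1+n3+n5 - 3*n0"
  unfolding epsX_def
  apply (rule UD_eqI, rule ud_eq, unfold geoEps0 nth6)
   apply (rule udr udE)+
  apply (simp add: algebra_simps)
  done
lemma wt1: "wtX 1 [n0,n1,n2,n3,n4,n5] = 2*n1+2*n3+2*n5-n0-3*n2-3*n4"
  unfolding wtX_def
  apply (rule UD_eqI, rule ud_eq, unfold geoGamma1 nth6)
   apply (rule udr)+
  apply (simp add: algebra_simps)
  done
lemma wt2: "wtX 2 [n0,n1,n2,n3,n4,n5] = 2*n2+2*n4-n1-n3-n5"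
  unfolding wtX_def
  apply (rule UD_eqI, rule ud_eq, unfold geoGamma2 nth6)
   apply (rule udr)+
  apply (simp add: algebra_simps)
  done
lemma wt0: "wtX 0 [n0,n1,n2,n3,n4,n5] = 2*n0-n1-n3-n5"
  unfolding wtX_def
  apply (rule UD_eqI, rule ud_eq, unfold geoGamma0 nth6)
   apply (rule udr)+
  apply (simp add: algebra_simps)
  done

definition Om :: "int list \<Rightarrow> int list" where
  "Om n = [n!5, n!4 - n!5, n!3 - 2*n!4, 2*n!2 - n!3, n!1 - n!2, n!0 - n!1]"

lemma Om6: "Om [n0,n1,n2,n3,n4,n5] = [n5, n4 - n5, n3 - 2*n4, 2*n2 - n3, n1 - n2, n0 - n1]"
  by (simp add: Om_def nth6)

lemma map6: "map f [0..<6] = [f 0, f 1, f 2, f 3, f 4, f 5]"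
  by (simp add: upt_rec eval_nat_numeral)

lemma eX6: "eX i [n0,n1,n2,n3,n4,n5] = [n0 + UD (geoR i 0) 1 [n0,n1,n2,n3,n4,n5],
  n1 + UD (geoR i 1) 1 [n0,n1,n2,n3,n4,n5], n2 + UD (geoR i 2) 1 [n0,n1,n2,n3,n4,n5],
  n3 + UD (geoR i 3) 1 [n0,n1,n2,n3,n4,n5], n4 + UD (geoR i 4) 1 [n0,n1,n2,n3,n4,n5],
  n5 + UD (geoR i 5) 1 [n0,n1,n2,n3,n4,n5]]"
  unfolding eX_def map6 nth6 ..

lemma fX6: "fX i [n0,n1,n2,n3,n4,n5] = [n0 + UD (geoR i 0) (-1) [n0,n1,n2,n3,n4,n5],
  n1 + UD (geoR i 1) (-1) [n0,n1,n2,n3,n4,n5], n2 + UD (geoR i 2) (-1) [n0,n1,n2,n3,n4,n5],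
  n3 + UD (geoR i 3) (-1) [n0,n1,n2,n3,n4,n5], n4 + UD (geoR i 4) (-1) [n0,n1,n2,n3,n4,n5],
  n5 + UD (geoR i 5) (-1) [n0,n1,n2,n3,n4,n5]]"
  unfolding fX_def map6 nth6 ..

lemma eB0: "eB 0 b = addv b (dvecE (zB1 b) (zB2 b) (zB3 b) (zB4 b))"
  unfolding eB_def dvecE_def Let_def by (simp add: if_distrib[where f="addv b"])
lemma fB0: "fB 0 b = addv b (dvecF (zB1 b) (zB2 b) (zB3 b) (zB4 b))"
  unfolding fB_def dvecF_def Let_def by (simp add: if_distrib[where f="addv b"])

lemma zB_Om:
  "zB1 [n5, n4 - n5, n3 - 2*n4, 2*n2 - n3, n1 - n2, n0 - n1] = n0-n1-n5"
  "zB2 [n5, n4 - n5, n3 - 2*n4, 2*n2 - n3, n1 - n2, n0 - n1] = n1-3*n2+n3"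
  "zB3 [n5, n4 - n5, n3 - 2*n4, 2*n2 - n3, n1 - n2, n0 - n1] = n3-3*n4+n5"
  "zB4 [n5, n4 - n5, n3 - 2*n4, 2*n2 - n3, n1 - n2, n0 - n1] = n2-n3+n4"
proof -
  have e: "2 * n2 - n3 - (n3 - 2 * n4) = 2 * (n2-n3+n4)" by simp
  show "zB1 [n5, n4 - n5, n3 - 2*n4, 2*n2 - n3, n1 - n2, n0 - n1] = n0-n1-n5" by (simp add: zB1_def nth6)
  show "zB2 [n5, n4 - n5, n3 - 2*n4, 2*n2 - n3, n1 - n2, n0 - n1] = n1-3*n2+n3" by (simp add: zB2_def nth6)
  show "zB3 [n5, n4 - n5, n3 - 2*n4, 2*n2 - n3, n1 - n2, n0 - n1] = n3-3*n4+n5" by (simp add: zB3_def nth6)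
  show "zB4 [n5, n4 - n5, n3 - 2*n4, 2*n2 - n3, n1 - n2, n0 - n1] = n2-n3+n4" unfolding zB4_def nth6 e by simp
qed

lemma sB_Om: "sB [n5, n4 - n5, n3 - 2*n4, 2*n2 - n3, n1 - n2, n0 - n1] = n0"
proof -
  have e: "n3 - 2 * n4 + (2 * n2 - n3) = 2 * (n2 - n4)" by simp
  show ?thesis unfolding sB_def nth6 e by simp
qed

lemma maxA_EE: "maxA b = EE (zB1 b) (zB2 b) (zB3 b) (zB4 b)"
  by (simp add: maxA_def EE_def m6_def Let_def)

lemma main0:
  fixes n0 n1 n2 n3 n4 n5 :: int
  defines "L \<equiv> [n0,n1,n2,n3,n4,n5]"
  shows "Om (eX 0 L) = eB 0 (Om L) \<and> Om (fX 0 L) = fB 0 (Om L) \<and>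
    epsB 0 (Om L) = epsX 0 L \<and> phiB 0 (Om L) = phiX 0 L \<and> wtB 0 (Om L) = wtX 0 L"
proof (intro conjI)
  have k1: "(1::int) = 1 \<or> (1::int) = -1" and k2: "(-1::int) = 1 \<or> (-1::int) = -1" by simp_all
  show "Om (eX 0 L) = eB 0 (Om L)"
    unfolding L_def eB0 zB_Om e0core eX6 UD00 UD01 UD02[OF k1] UD03 UD04[OF k1] UD05 Om6
    by (simp add: addv_def)
  show "Om (fX 0 L) = fB 0 (Om L)"
    unfolding L_def fB0 zB_Om f0core fX6 UD00 UD01 UD02[OF k2] UD03 UD04[OF k2] UD05 Om6
    by (simp add: addv_def)
  have ep: "epsB 0 (Om L) = epsX 0 L"
    unfolding L_def Om6 epsB_def maxA_EE zB_Om sB_Om eps0 by simp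
  have ph: "phiB 0 (Om L) = phiX 0 L"
    unfolding L_def Om6 phiB_def phiX_def maxA_EE zB_Om sB_Om eps0 wt0 by simp
  show "epsB 0 (Om L) = epsX 0 L" by (rule ep)
  show "phiB 0 (Om L) = phiX 0 L" by (rule ph)
  show "wtB 0 (Om L) = wtX 0 L"
    using ep ph unfolding wtB_def phiX_def by simp
qed

lemma main1:
  fixes n0 n1 n2 n3 n4 n5 :: int
  defines "L \<equiv> [n0,n1,n2,n3,n4,n5]"
  shows "Om (eX 1 L) = eB 1 (Om L) \<and> Om (fX 1 L) = fB 1 (Om L) \<and>
    epsB 1 (Om L) = epsX 1 L \<and> phiB 1 (Om L) = phiX 1 L \<and> wtB 1 (Om L) = wtX 1 L"
proof (intro conjI)
  show "Om (eX 1 L) = eB 1 (Om L)"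
    unfolding L_def eX6 UD11 UD13 UD15 UD1o Om6 eB_def addv_def pos_def nth6
    by (simp split: if_split; arith)
  show "Om (fX 1 L) = fB 1 (Om L)"
    unfolding L_def fX6 UD11 UD13 UD15 UD1o Om6 fB_def addv_def pos_def nth6
    by (simp split: if_split; arith)
  have ep: "epsB 1 (Om L) = epsX 1 L"
    unfolding L_def Om6 epsB_def pos_def eps1 nth6 by (simp; arith?)
  have ph: "phiB 1 (Om L) = phiX 1 L"
    unfolding L_def Om6 phiB_def phiX_def pos_def eps1 wt1 nth6 by (simp; arith?)
  show "epsB 1 (Om L) = epsX 1 L" by (rule ep)
  show "phiB 1 (Om L) = phiX 1 L" by (rule ph)
  show "wtB 1 (Om L) = wtX 1 L"
    using ep ph unfolding wtB_def phiX_def by simp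
qed

lemma pos2: "pos (a - b) div 2 = max 0 (y::int)" if "a - b = 2 * y" for a b
  using that by (simp add: pos_def max_def)

lemma main2:
  fixes n0 n1 n2 n3 n4 n5 :: int
  defines "L \<equiv> [n0,n1,n2,n3,n4,n5]"
  shows "Om (eX 2 L) = eB 2 (Om L) \<and> Om (fX 2 L) = fB 2 (Om L) \<and>
    epsB 2 (Om L) = epsX 2 L \<and> phiB 2 (Om L) = phiX 2 L \<and> wtB 2 (Om L) = wtX 2 L"
proof (intro conjI)
  show "Om (eX 2 L) = eB 2 (Om L)"
    unfolding L_def eX6 UD22 UD24 UD2o Om6 eB_def addv_def nth6
    by (simp split: if_split; arith)
  show "Om (fX 2 L) = fB 2 (Om L)"
    unfolding L_def fX6 UD22 UD24 UD2o Om6 fB_def addv_def nth6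
    by (simp split: if_split; arith)
  have a: "n3 - 2 * n4 - (2 * n2 - n3) = 2 * (n3 - n2 - n4)" by simp
  have b: "2 * n2 - n3 - (n3 - 2 * n4) = 2 * (n2 + n4 - n3)" by simp
  have ep: "epsB 2 (Om L) = epsX 2 L"
    unfolding L_def Om6 epsB_def eps2 nth6 pos2[OF a] by (simp; arith?)
  have ph: "phiB 2 (Om L) = phiX 2 L"
    unfolding L_def Om6 phiB_def phiX_def eps2 wt2 nth6 pos2[OF b] by (simp; arith?)
  show "epsB 2 (Om L) = epsX 2 L" by (rule ep)
  show "phiB 2 (Om L) = phiX 2 L" by (rule ph)
  show "wtB 2 (Om L) = wtX 2 L"
    using ep ph unfolding wtB_def phiX_def by simp
qed

lemma len6: "length n = 6 \<Longrightarrow> \<exists>a b c d e f. n = [a,b,c,d,e,f]"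
  by (simp add: length_Suc_conv eval_nat_numeral) blast

definition Oinv :: "int list \<Rightarrow> int list" where
  "Oinv b = (let n5 = b!0; n4 = b!1 + b!0; n3 = b!2 + 2*n4; n2 = (b!3 + n3) div 2;
     n1 = b!4 + n2; n0 = b!5 + n1 in [n0,n1,n2,n3,n4,n5])"

lemma bij_Om: "bij_betw Om Xset Binf"
proof (rule bij_betw_byWitness[where f'=Oinv])
  show "\<forall>a\<in>Xset. Oinv (Om a) = a"
  proof
    fix a assume "a \<in> Xset"
    then obtain n0 n1 n2 n3 n4 n5 where a: "a = [n0,n1,n2,n3,n4,n5]"
      using len6 unfolding Xset_def by blast
    have e: "2 * n2 - n3 + (n3 - 2 * (n4 - n5 + n5)) + 2 * (n4 - n5 + n5) = 2 * n2" by simp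
    show "Oinv (Om a) = a" unfolding a Om6 Oinv_def Let_def nth6 e by simp
  qed
  show "\<forall>b\<in>Binf. Om (Oinv b) = b"
  proof
    fix b assume "b \<in> Binf"
    hence bl: "length b = 6" and ev0: "even (b!2 - b!3)" unfolding Binf_def by auto
    then obtain b0 b1 b2 b3 b4 b5 where bb: "b = [b0,b1,b2,b3,b4,b5]"
      using len6 by blast
    have ev: "even (b2 - b3)" using ev0 unfolding bb nth6 .
    then obtain m where m: "b2 - b3 = 2 * m" unfolding dvd_def by blast
    have e: "b3 + (b2 + 2 * (b1 + b0)) = 2 * (b3 + m + b1 + b0)" using m by simp
    show "Om (Oinv b) = b" unfolding bb Om6 Oinv_def Let_def nth6 e using m by simp
  qed
  show "Om ` Xset \<subseteq> Binf"
  proof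
    fix x assume "x \<in> Om ` Xset"
    then obtain a where "a \<in> Xset" "x = Om a" by blast
    then obtain n0 n1 n2 n3 n4 n5 where "x = Om [n0,n1,n2,n3,n4,n5]"
      using len6 unfolding Xset_def by blast
    moreover have "even (n3 - 2 * n4 - (2 * n2 - n3))"
    proof -
      have "n3 - 2 * n4 - (2 * n2 - n3) = 2 * (n3 - n4 - n2)" by simp
      thus ?thesis by simp
    qed
    ultimately show "x \<in> Binf" unfolding Binf_def Om6 by (simp add: nth6)
  qed
  show "Oinv ` Binf \<subseteq> Xset"
    unfolding Xset_def Oinv_def Let_def by auto
qed

theorem theorem6p1:
  shows "\<exists>\<Omega>. bij_betw \<Omega> Xset Binf \<and>
    (\<forall>i\<in>{0,1,2::nat}. \<forall>n\<in>Xset.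
       \<Omega> (eX i n) = eB i (\<Omega> n) \<and>
       \<Omega> (fX i n) = fB i (\<Omega> n) \<and>
       epsB i (\<Omega> n) = epsX i n \<and>
       phiB i (\<Omega> n) = phiX i n \<and>
       wtB i (\<Omega> n) = wtX i n)"
proof -
  have "\<forall>i\<in>{0,1,2::nat}. \<forall>n\<in>Xset. Om (eX i n) = eB i (Om n) \<and> Om (fX i n) = fB i (Om n) \<and>
       epsB i (Om n) = epsX i n \<and> phiB i (Om n) = phiX i n \<and> wtB i (Om n) = wtX i n"
  proof (intro ballI)
    fix i n assume i: "i \<in> {0,1,2::nat}" and n: "n \<in> Xset"
    obtain n0 n1 n2 n3 n4 n5 where nn: "n = [n0,n1,n2,n3,n4,n5]"
      using n len6 unfolding Xset_def by blast
    from i show "Om (eX i n) = eB i (Om n) \<and> Om (fX i n) = fB i (Om n) \<and>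
       epsB i (Om n) = epsX i n \<and> phiB i (Om n) = phiX i n \<and> wtB i (Om n) = wtX i n"
      unfolding nn using main0 main1 main2 by auto
  qed
  with bij_Om show ?thesis by blast
qed

end
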